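(* Let $C$ be a conformal algebra and let $f(a_1,\dots,a_n)=\sum_{\sigma\in S_n} t_\sigma(a_{1\sigma},\dots,a_{n\sigma})$ be a homogeneous multilinear non-associative polynomial over $\Bbbk$. If $C$, regarded as a pseudoalgebra, satisfies $f^*(a_1,\dots,a_n)=\sum_{\sigma\in S_n}(\sigma\otimes_H \mathrm{id}_C)\, t^*_\sigma(a_{1\sigma},\dots,a_{n\sigma})=0$ for all $a_1,\dots,a_n\in C$, then the coefficient algebra $\operatorname{Coeff}C$ satisfies the identity $f=0$.
   Context: Let $\Bbbk$ be a field of characteristic $0$ and $H=\Bbbk[D]$ the polynomial algebra, regarded as a Hopf algebra with $\Delta(D)=D\otimes1+1\otimes D$, $\varepsilon(D)=0$, $S(D)=-D$. Sweedler notation: $\Delta(f)=f_{(1)}\otimes f_{(2)}$; iterated coproduct $\Delta^{(1)}=\mathrm{id}_H$, $\Delta^{(k+1)}=(\mathrm{id}_H\otimes\Delta^{(k)})\Delta$. $H$ acts on $H^{\otimes n}$ from the right by $(f_1\otimes\cdots\otimes f_n)h=f_1h_{(1)}\otimes\cdots\otimes f_nh_{(n)}$, and for a left $H$-module $M$ the space $H^{\otimes n}\otimes_H M$ is formed with respect to this action (so $H\otimes_H M\cong M$). A conformal algebra is a unital left $H$-module $C$ with $\Bbbk$-bilinear operations $a_{(n)}b$, $n\ge0$, such that for all $a,b\in C$: $a_{(n)}b=0$ for all sufficiently large $n$; $(Da)_{(n)}b=-n\,a_{(n-1)}b$ and $a_{(n)}(Db)=D(a_{(n)}b)+n\,a_{(n-1)}b$.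 Pseudoproduct: $a*b=\sum_{s\ge0}\frac{(-D)^s}{s!}\otimes1\otimes_H(a_{(s)}b)\in (H\otimes H)\otimes_H C$. Expanded pseudoproduct: for $F\in H^{\otimes n}$, $G\in H^{\otimes m}$, $a,b\in C$ with $a*b=\sum_i f_i\otimes g_i\otimes_H c_i$, set $(F\otimes_H a)*(G\otimes_H b)=\sum_i F\Delta^{(n)}(f_i)\otimes G\Delta^{(m)}(g_i)\otimes_H c_i\in H^{\otimes(n+m)}\otimes_H C$ (extended linearly). Coefficient algebra: $\operatorname{Coeff}C=\Bbbk[t,t^{-1}]\otimes_H C$, where $\Bbbk[t,t^{-1}]$ is a right $H$-module via $t^nD=-nt^{n-1}$; writing $a(n)=t^n\otimes_H a$, the multiplication is $a(n)b(m)=\sum_{s\ge0}\binom{n}{s}(a_{(s)}b)(n+m-s)$. Pseudo-form of an identity: each $t_\sigma(b_1,\dots,b_n)$ is a linear combination of bracketings of the word $b_1b_2\cdots b_n$ (letters in this order), and $i\sigma$ is the image of $i$ under $\sigma$. For a bracketing $t$, $t^*(b_1,\dots,b_n)\in H^{\otimes n}\otimes_H C$ is obtained by replacing every product by the expanded pseudoproduct, each $b_i\in C$ being regarded as $1\otimes_H b_i\in H\otimes_H C$; extend linearly. For $\sigma\in S_n$, $\sigma\otimes_H\mathrm{id}_C$ denotes the map on $H^{\otimes n}\otimes_H C$ induced by the permutation of tensor factors of $H^{\otimes n}$ sending the $k$-th factor to position $k\sigma$. *)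

theory Defs
  imports Complex_Main "HOL-Library.Poly_Mapping" "HOL-Library.Function_Algebras"
          "HOL-Combinatorics.Permutations"
begin

text \<open>A conformal algebra over the field 'k (char 0): a 'k-vector space C (scalar
multiplication sm) that is a left H-module for H = k[D] (i.e. D is a linear
endomorphism), with k-bilinear n-products cp n a b = a_(n) b satisfying locality and
the two sesquilinearity axioms.\<close>

definition conformal_algebra ::
  "('k::field_char_0 \<Rightarrow> 'c::ab_group_add \<Rightarrow> 'c) \<Rightarrow> ('c \<Rightarrow> 'c) \<Rightarrow> (nat \<Rightarrow> 'c \<Rightarrow> 'c \<Rightarrow> 'c) \<Rightarrow> bool"
where
  "conformal_algebra sm D cp \<longleftrightarrow>
     vector_space sm \<and>
     (\<forall>x y. D (x + y) = D x + D y) \<and> (\<forall>k x. D (sm k x) = sm k (D x)) \<and>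
     (\<forall>n x y b. cp n (x + y) b = cp n x b + cp n y b) \<and>
     (\<forall>n a x y. cp n a (x + y) = cp n a x + cp n a y) \<and>
     (\<forall>n k a b. cp n (sm k a) b = sm k (cp n a b)) \<and>
     (\<forall>n k a b. cp n a (sm k b) = sm k (cp n a b)) \<and>
     (\<forall>a b. \<exists>N. \<forall>n\<ge>N. cp n a b = 0) \<and>
     (\<forall>n a b. cp n (D a) b = sm (- of_nat n) (cp (n - 1) a b)) \<and>
     (\<forall>n a b. cp n a (D b) = D (cp n a b) + sm (of_nat n) (cp (n - 1) a b))"

definition lbound :: "(nat \<Rightarrow> 'c \<Rightarrow> 'c \<Rightarrow> 'c::zero) \<Rightarrow> 'c \<Rightarrow> 'c \<Rightarrow> nat" where
  "lbound cp a b = (LEAST N. \<forall>n\<ge>N. cp n a b = 0)"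

text \<open>Bracketing shapes of a word; the letters are filled in from left to right.\<close>
datatype shape = Lf | Nd shape shape

fun nleaves :: "shape \<Rightarrow> nat" where
  "nleaves Lf = 1"
| "nleaves (Nd l r) = nleaves l + nleaves r"

text \<open>A homogeneous multilinear polynomial
  f(a_1..a_n) = sum over sigma in S_n of t_sigma(a_(1 sigma),...,a_(n sigma)),
  t_sigma = sum over bracketings t with n leaves of coef sigma t * t;
  letters are indexed 0..n-1 and permutations are permutations of {..<n}.\<close>

text \<open>H^{\<otimes>N} is the polynomial ring k[x_0,...,x_(N-1)] (x_i = D in the i-th tensor
factor), modelled as 'k mpoly.  An element of H^{\<otimes>N} \<otimes>_k C is represented by a
finite formal sum (list) of pairs (F, c); its canonical form is the finitely supported
function monomial \<mapsto> C-coefficient.\<close>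

type_synonym 'k mpoly = "(nat \<Rightarrow>\<^sub>0 nat) \<Rightarrow>\<^sub>0 'k"

definition Var :: "nat \<Rightarrow> 'k::comm_ring_1 mpoly" where
  "Var i = Poly_Mapping.single (Poly_Mapping.single i 1) 1"

definition Cst :: "'k \<Rightarrow> 'k::comm_ring_1 mpoly" where
  "Cst c = Poly_Mapping.single 0 c"

text \<open>Delta^{(N)}(D) restricted to the factors in I: sum of x_i, i in I.\<close>
definition DeltaD :: "nat set \<Rightarrow> 'k::comm_ring_1 mpoly" where
  "DeltaD I = (\<Sum>i\<in>I. Var i)"

definition canon :: "('k::comm_ring_1 \<Rightarrow> 'c::ab_group_add \<Rightarrow> 'c) \<Rightarrow> ('k mpoly \<times> 'c) list
                     \<Rightarrow> (nat \<Rightarrow>\<^sub>0 nat) \<Rightarrow> 'c" where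
  "canon sm X = (\<lambda>\<alpha>. sum_list (map (\<lambda>(F, c). sm (Poly_Mapping.lookup F \<alpha>) c) X))"

definition uses_vars_below :: "nat \<Rightarrow> 'k::zero mpoly \<Rightarrow> bool" where
  "uses_vars_below N F \<longleftrightarrow> (\<forall>\<alpha>\<in>Poly_Mapping.keys F. Poly_Mapping.keys \<alpha> \<subseteq> {..<N})"

text \<open>The kernel of H^{\<otimes>N} \<otimes>_k C \<rightarrow> H^{\<otimes>N} \<otimes>_H C: the k-span of the elements
  F*Delta^{(N)}(D) \<otimes> c - F \<otimes> Dc  (H = k[D] is generated by D).\<close>
inductive_set hrel :: "('k::comm_ring_1 \<Rightarrow> 'c::ab_group_add \<Rightarrow> 'c) \<Rightarrow> ('c \<Rightarrow> 'c) \<Rightarrow> nat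
                       \<Rightarrow> ((nat \<Rightarrow>\<^sub>0 nat) \<Rightarrow> 'c) set"
  for sm D N where
  hrel_zero: "(\<lambda>_. 0) \<in> hrel sm D N"
| hrel_gen: "uses_vars_below N F \<Longrightarrow>
     canon sm [(F * DeltaD {..<N}, c)] - canon sm [(F, D c)] \<in> hrel sm D N"
| hrel_add: "x \<in> hrel sm D N \<Longrightarrow> y \<in> hrel sm D N \<Longrightarrow> x + y \<in> hrel sm D N"
| hrel_smul: "x \<in> hrel sm D N \<Longrightarrow> (\<lambda>\<alpha>. sm k (x \<alpha>)) \<in> hrel sm D N"

text \<open>Expanded pseudoproduct, in absolute variable numbering: X lives in the factors I
  (the first n factors), Y in the following factors; F \<otimes> G is the product F*G and
  Delta^{(n)}((-D)^s/s!) = (-(sum of x_i, i in I))^s / s!.\<close>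
definition epp :: "(nat \<Rightarrow> 'c \<Rightarrow> 'c \<Rightarrow> 'c::zero) \<Rightarrow> nat set \<Rightarrow> ('k::field_char_0 mpoly \<times> 'c) list
                   \<Rightarrow> ('k mpoly \<times> 'c) list \<Rightarrow> ('k mpoly \<times> 'c) list" where
  "epp cp I X Y = concat (map (\<lambda>(F, c). concat (map (\<lambda>(G, d).
      map (\<lambda>s. (F * G * Cst (1 / fact s) * (- DeltaD I) ^ s, cp s c d)) [0..<lbound cp c d]) Y)) X)"

text \<open>t^*(b_1,...,b_n) for a bracketing t whose leaves occupy tensor factors off, off+1, ...\<close>
fun pstar :: "(nat \<Rightarrow> 'c \<Rightarrow> 'c \<Rightarrow> 'c::zero) \<Rightarrow> nat \<Rightarrow> shape \<Rightarrow> 'c list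
              \<Rightarrow> ('k::field_char_0 mpoly \<times> 'c) list" where
  "pstar cp off Lf bs = [(1, bs ! 0)]"
| "pstar cp off (Nd l r) bs =
     epp cp {off..<off + nleaves l} (pstar cp off l (take (nleaves l) bs))
                                (pstar cp (off + nleaves l) r (drop (nleaves l) bs))"

text \<open>sigma \<otimes>_H id_C: the k-th tensor factor is moved to position sigma k, i.e. the
  monomial with exponent vector alpha goes to the one with exponent alpha \<circ> inv sigma.\<close>
definition perm_t :: "(nat \<Rightarrow> nat) \<Rightarrow> ((nat \<Rightarrow>\<^sub>0 nat) \<Rightarrow> 'c) \<Rightarrow> (nat \<Rightarrow>\<^sub>0 nat) \<Rightarrow> 'c" where
  "perm_t \<sigma> T = (\<lambda>\<beta>. T (Poly_Mapping.map_key \<sigma> \<beta>))"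

definition fstar :: "('k::field_char_0 \<Rightarrow> 'c::ab_group_add \<Rightarrow> 'c) \<Rightarrow> (nat \<Rightarrow> 'c \<Rightarrow> 'c \<Rightarrow> 'c)
       \<Rightarrow> nat \<Rightarrow> ((nat \<Rightarrow> nat) \<Rightarrow> shape \<Rightarrow> 'k) \<Rightarrow> (nat \<Rightarrow> 'c) \<Rightarrow> (nat \<Rightarrow>\<^sub>0 nat) \<Rightarrow> 'c" where
  "fstar sm cp n coef a =
     (\<Sum>\<sigma>\<in>{\<sigma>. \<sigma> permutes {..<n}}. \<Sum>t\<in>{t. nleaves t = n}.
        (\<lambda>\<beta>. sm (coef \<sigma> t)
           (perm_t \<sigma> (canon sm (pstar cp 0 t (map (\<lambda>i. a (\<sigma> i)) [0..<n]))) \<beta>)))"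

text \<open>Elements are represented by finite formal sums of a(m) = t^m \<otimes>_H a (lists of
  (m, a)); canonical representative in k[t,t^{-1}] \<otimes>_k C: function m \<mapsto> C.\<close>
definition canonC :: "(int \<times> 'c::ab_group_add) list \<Rightarrow> int \<Rightarrow> 'c" where
  "canonC X = (\<lambda>m. sum_list (map (\<lambda>(k, c). if k = m then c else 0) X))"

text \<open>Kernel of k[t,t^{-1}] \<otimes>_k C \<rightarrow> k[t,t^{-1}] \<otimes>_H C: span of
  t^m \<otimes> Da - (t^m D) \<otimes> a = (Da)(m) + m a(m-1).\<close>
inductive_set crel :: "('k::comm_ring_1 \<Rightarrow> 'c::ab_group_add \<Rightarrow> 'c) \<Rightarrow> ('c \<Rightarrow> 'c) \<Rightarrow> (int \<Rightarrow> 'c) set"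
  for sm D where
  crel_zero: "(\<lambda>_. 0) \<in> crel sm D"
| crel_gen: "canonC [(m, D a), (m - 1, sm (of_int m) a)] \<in> crel sm D"
| crel_add: "x \<in> crel sm D \<Longrightarrow> y \<in> crel sm D \<Longrightarrow> x + y \<in> crel sm D"
| crel_smul: "x \<in> crel sm D \<Longrightarrow> (\<lambda>m. sm k (x m)) \<in> crel sm D"

definition cmul :: "('k::field_char_0 \<Rightarrow> 'c::ab_group_add \<Rightarrow> 'c) \<Rightarrow> (nat \<Rightarrow> 'c \<Rightarrow> 'c \<Rightarrow> 'c)
                    \<Rightarrow> (int \<times> 'c) list \<Rightarrow> (int \<times> 'c) list \<Rightarrow> (int \<times> 'c) list" where
  "cmul sm cp X Y = concat (map (\<lambda>(n, a). concat (map (\<lambda>(m, b).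
      map (\<lambda>s. (n + m - int s, sm ((of_int n :: 'k) gchoose s) (cp s a b))) [0..<lbound cp a b]) Y)) X)"

fun evalC :: "('k::field_char_0 \<Rightarrow> 'c::ab_group_add \<Rightarrow> 'c) \<Rightarrow> (nat \<Rightarrow> 'c \<Rightarrow> 'c \<Rightarrow> 'c)
              \<Rightarrow> shape \<Rightarrow> (int \<times> 'c) list list \<Rightarrow> (int \<times> 'c) list" where
  "evalC sm cp Lf xs = xs ! 0"
| "evalC sm cp (Nd l r) xs =
     cmul sm cp (evalC sm cp l (take (nleaves l) xs)) (evalC sm cp r (drop (nleaves l) xs))"

definition fcoeff :: "('k::field_char_0 \<Rightarrow> 'c::ab_group_add \<Rightarrow> 'c) \<Rightarrow> (nat \<Rightarrow> 'c \<Rightarrow> 'c \<Rightarrow> 'c)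
       \<Rightarrow> nat \<Rightarrow> ((nat \<Rightarrow> nat) \<Rightarrow> shape \<Rightarrow> 'k) \<Rightarrow> (nat \<Rightarrow> (int \<times> 'c) list) \<Rightarrow> int \<Rightarrow> 'c" where
  "fcoeff sm cp n coef x =
     (\<Sum>\<sigma>\<in>{\<sigma>. \<sigma> permutes {..<n}}. \<Sum>t\<in>{t. nleaves t = n}.
        (\<lambda>m. sm (coef \<sigma> t) (canonC (evalC sm cp t (map (\<lambda>i. x (\<sigma> i)) [0..<n])) m)))"

end

theory Submission
  imports Defs
begin
abbreviation lk where "lk \<equiv> Poly_Mapping.lookup"
abbreviation ks where "ks \<equiv> Poly_Mapping.keys"
abbreviation sg where "sg \<equiv> Poly_Mapping.single"

lemma pm_sum_monomials: "(\<Sum>a\<in>ks F. sg a (lk F a)) = F"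
  by (rule poly_mapping_eqI) (auto simp: Poly_Mapping.lookup_sum Poly_Mapping.lookup_single when_def in_keys_iff)

definition L :: "((nat \<Rightarrow>\<^sub>0 nat) \<Rightarrow> 'k::comm_ring_1) \<Rightarrow> 'k mpoly \<Rightarrow> 'k" where
  "L g F = (\<Sum>\<alpha>\<in>ks F. lk F \<alpha> * g \<alpha>)"

lemma L_superset: "finite S \<Longrightarrow> ks F \<subseteq> S \<Longrightarrow> L g F = (\<Sum>\<alpha>\<in>S. lk F \<alpha> * g \<alpha>)"
  unfolding L_def by (rule sum.mono_neutral_left) (auto simp: in_keys_iff)

lemma L_add: "L g (F + G) = L g F + L g G"
proof -
  let ?S = "ks F \<union> ks G"
  have "L g (F + G) = (\<Sum>\<alpha>\<in>?S. lk (F+G) \<alpha> * g \<alpha>)"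
    by (rule L_superset) (auto dest: set_mp[OF Poly_Mapping.keys_add])
  also have "\<dots> = (\<Sum>\<alpha>\<in>?S. lk F \<alpha> * g \<alpha>) + (\<Sum>\<alpha>\<in>?S. lk G \<alpha> * g \<alpha>)"
    by (simp add: Poly_Mapping.lookup_add distrib_right sum.distrib)
  also have "\<dots> = L g F + L g G" using L_superset[of ?S F g] L_superset[of ?S G g] by simp
  finally show ?thesis .
qed

lemma L_zero[simp]: "L g 0 = 0" by (simp add: L_def)

lemma L_single[simp]: "L g (sg a c) = c * g a" by (simp add: L_def)

lemma L_sum: "L g (\<Sum>i\<in>A. F i) = (\<Sum>i\<in>A. L g (F i))"
  by (induction A rule: infinite_finite_induct) (auto simp: L_add)

lemma L_cong: "(\<And>\<alpha>. \<alpha> \<in> ks F \<Longrightarrow> g \<alpha> = g' \<alpha>) \<Longrightarrow> L g F = L g' F"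
  by (simp add: L_def)

lemma L_mult: "L g (F * G) = (\<Sum>\<alpha>\<in>ks F. \<Sum>\<beta>\<in>ks G. lk F \<alpha> * lk G \<beta> * g (\<alpha> + \<beta>))"
proof -
  have "F * G = (\<Sum>\<alpha>\<in>ks F. sg \<alpha> (lk F \<alpha>)) * (\<Sum>\<beta>\<in>ks G. sg \<beta> (lk G \<beta>))"
    by (simp add: pm_sum_monomials)
  also have "\<dots> = (\<Sum>\<alpha>\<in>ks F. \<Sum>\<beta>\<in>ks G. sg (\<alpha>+\<beta>) (lk F \<alpha> * lk G \<beta>))"
    by (simp add: sum_distrib_left sum_distrib_right Poly_Mapping.mult_single) (rule sum.swap)
  finally show ?thesis by (simp add: L_sum)
qed

lemma L_Cst: "L g (Cst c * F) = c * L g F"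
  unfolding Cst_def L_mult by (simp add: sum_distrib_left L_def mult.assoc)

lemma L_Var: "L g (F * Var i) = L (\<lambda>\<alpha>. g (\<alpha> + sg i 1)) F"
  unfolding Var_def L_mult by (simp add: L_def)

lemma L_neg: "L g (- F) = - L g F"
  using L_add[of g F "-F"] by (simp add: eq_neg_iff_add_eq_0 add.commute)

lemma L_one[simp]: "L g 1 = g 0"
  by (metis L_single Poly_Mapping.single_one mult_1)

definition dg :: "(nat \<Rightarrow>\<^sub>0 nat) \<Rightarrow> nat" where "dg \<alpha> = (\<Sum>i\<in>ks \<alpha>. lk \<alpha> i)"
definition ff :: "'k::comm_ring_1 \<Rightarrow> nat \<Rightarrow> 'k" where "ff x s = (\<Prod>i<s. x - of_nat i)"
definition phi :: "'k::comm_ring_1 \<Rightarrow> nat \<Rightarrow> 'k" where "phi x a = (-1)^a * ff x a"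
definition w :: "(nat \<Rightarrow> int) \<Rightarrow> (nat \<Rightarrow>\<^sub>0 nat) \<Rightarrow> 'k::comm_ring_1" where
  "w m \<alpha> = (\<Prod>i\<in>ks \<alpha>. phi (of_int (m i)) (lk \<alpha> i))"

lemma ff_0[simp]: "ff x 0 = 1" by (simp add: ff_def)

lemma phi_0[simp]: "phi x 0 = 1" by (simp add: phi_def ff_def)

lemma ff_Suc: "ff x (Suc s) = x * ff (x - 1) s"
  unfolding ff_def prod.lessThan_Suc_shift by (simp add: algebra_simps)

lemma ff_Suc2: "ff x (Suc s) = ff x s * (x - of_nat s)"
  unfolding ff_def by simp

lemma phi_Suc: "phi x (Suc a) = - (x - of_nat a) * phi x a"
  unfolding phi_def ff_Suc2 by (simp add: algebra_simps)

lemma dg_superset: "finite S \<Longrightarrow> ks \<alpha> \<subseteq> S \<Longrightarrow> dg \<alpha> = (\<Sum>i\<in>S. lk \<alpha> i)"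
  unfolding dg_def by (rule sum.mono_neutral_left) (auto simp: in_keys_iff)

lemma w_superset: "finite S \<Longrightarrow> ks \<alpha> \<subseteq> S \<Longrightarrow> w m \<alpha> = (\<Prod>i\<in>S. phi (of_int (m i)) (lk \<alpha> i))"
  unfolding w_def by (rule prod.mono_neutral_left) (auto simp: in_keys_iff)

lemma keys_add_nat: "ks (\<alpha> + \<beta>) = ks \<alpha> \<union> ks (\<beta> :: nat \<Rightarrow>\<^sub>0 nat)"
  by (auto simp: in_keys_iff Poly_Mapping.lookup_add)

lemma dg_add: "dg (\<alpha> + \<beta>) = dg \<alpha> + dg \<beta>"
proof -
  let ?S = "ks \<alpha> \<union> ks \<beta>"
  have "dg (\<alpha> + \<beta>) = (\<Sum>i\<in>?S. lk (\<alpha>+\<beta>) i)" by (rule dg_superset) (auto simp: keys_add_nat)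
  also have "\<dots> = (\<Sum>i\<in>?S. lk \<alpha> i) + (\<Sum>i\<in>?S. lk \<beta> i)" by (simp add: Poly_Mapping.lookup_add sum.distrib)
  also have "\<dots> = dg \<alpha> + dg \<beta>" using dg_superset[of ?S \<alpha>] dg_superset[of ?S \<beta>] by simp
  finally show ?thesis .
qed

lemma dg_e[simp]: "dg (sg i 1) = 1" by (simp add: dg_def)
lemma dg_e'[simp]: "dg (sg i (Suc 0)) = 1" by (simp add: dg_def)
lemma dg_0[simp]: "dg 0 = 0" by (simp add: dg_def)
lemma w_0[simp]: "w m 0 = 1" by (simp add: w_def)

lemma w_add_disj:
  assumes "ks \<alpha> \<inter> ks \<beta> = {}"
  shows "w m (\<alpha> + \<beta>) = w m \<alpha> * w m \<beta>"
proof -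
  let ?S = "ks \<alpha> \<union> ks \<beta>"
  have "w m (\<alpha> + \<beta>) = (\<Prod>i\<in>?S. phi (of_int (m i)) (lk (\<alpha>+\<beta>) i))"
    by (rule w_superset) (auto simp: keys_add_nat)
  also have "\<dots> = (\<Prod>i\<in>ks \<alpha>. phi (of_int (m i)) (lk (\<alpha>+\<beta>) i)) * (\<Prod>i\<in>ks \<beta>. phi (of_int (m i)) (lk (\<alpha>+\<beta>) i))"
    using assms by (simp add: prod.union_disjoint)
  also have "(\<Prod>i\<in>ks \<alpha>. phi (of_int (m i)) (lk (\<alpha>+\<beta>) i)) = w m \<alpha>"
    unfolding w_def using assms by (intro prod.cong) (auto simp: Poly_Mapping.lookup_add in_keys_iff disjoint_iff)
  also have "(\<Prod>i\<in>ks \<beta>. phi (of_int (m i)) (lk (\<alpha>+\<beta>) i)) = w m \<beta>"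
  proof (unfold w_def, intro prod.cong refl)
    fix x assume "x \<in> ks \<beta>"
    then have "x \<notin> ks \<alpha>" using assms by blast
    then show "phi (of_int (m x)) (lk (\<alpha> + \<beta>) x) = phi (of_int (m x)) (lk \<beta> x)"
      by (simp add: Poly_Mapping.lookup_add in_keys_iff)
  qed
  finally show ?thesis .
qed

lemma w_step: "w m (\<alpha> + sg i 1) = - (of_int (m i) - of_nat (lk \<alpha> i)) * (w m \<alpha> :: 'k::comm_ring_1)"
proof -
  let ?S = "insert i (ks \<alpha>)"
  have "w m (\<alpha> + sg i 1) = (\<Prod>j\<in>?S. phi (of_int (m j)) (lk (\<alpha> + sg i 1) j) :: 'k)"
    by (rule w_superset) (auto simp: keys_add_nat)
  also have "\<dots> = phi (of_int (m i)) (Suc (lk \<alpha> i)) * (\<Prod>j\<in>ks \<alpha> - {i}. phi (of_int (m j)) (lk \<alpha> j))"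
  proof -
    have "(\<Prod>j\<in>ks \<alpha> - {i}. phi (of_int (m j)) (lk (\<alpha> + sg i 1) j)) = (\<Prod>j\<in>ks \<alpha> - {i}. phi (of_int (m j)) (lk \<alpha> j) :: 'k)"
      by (intro prod.cong) (auto simp: Poly_Mapping.lookup_add Poly_Mapping.lookup_single when_def)
    then show ?thesis
      by (simp add: prod.insert_remove Poly_Mapping.lookup_add Poly_Mapping.lookup_single)
  qed
  also have "(w m \<alpha> :: 'k) = phi (of_int (m i)) (lk \<alpha> i) * (\<Prod>j\<in>ks \<alpha> - {i}. phi (of_int (m j)) (lk \<alpha> j))"
    by (subst w_superset[of ?S]) (auto simp: prod.insert_remove)
  ultimately show ?thesis by (simp add: phi_Suc mult.assoc)
qed

definition vin :: "nat set \<Rightarrow> 'k::comm_ring_1 mpoly \<Rightarrow> bool" where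
  "vin I F \<longleftrightarrow> (\<forall>\<alpha>\<in>ks F. ks \<alpha> \<subseteq> I)"

lemma vin_zero[simp]: "vin I 0" by (simp add: vin_def)

lemma vin_mult: "vin I F \<Longrightarrow> vin I G \<Longrightarrow> vin I (F * G)"
  unfolding vin_def using Poly_Mapping.keys_mult[of F G] by (fastforce simp: keys_add_nat)

lemma vin_add: "vin I F \<Longrightarrow> vin I G \<Longrightarrow> vin I (F + G)"
  unfolding vin_def using Poly_Mapping.keys_add[of F G] by blast

lemma vin_neg: "vin I F \<Longrightarrow> vin I (- F)"
  unfolding vin_def by (auto simp: in_keys_iff)

lemma vin_sum: "(\<And>i. i \<in> A \<Longrightarrow> vin I (F i)) \<Longrightarrow> vin I (\<Sum>i\<in>A. F i)"
  by (induction A rule: infinite_finite_induct) (auto simp: vin_add)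

lemma vin_one[simp]: "vin I 1" by (simp add: vin_def)
lemma vin_Cst[simp]: "vin I (Cst c)" by (simp add: vin_def Cst_def)
lemma vin_Var: "i \<in> I \<Longrightarrow> vin I (Var i)" by (simp add: vin_def Var_def)
lemma vin_pow: "vin I F \<Longrightarrow> vin I (F ^ s)"
  by (induction s) (auto simp: vin_mult)
lemma vin_DeltaD: "vin I (DeltaD I)" unfolding DeltaD_def by (auto intro: vin_sum vin_Var)
lemma vin_mono: "vin I F \<Longrightarrow> I \<subseteq> I' \<Longrightarrow> vin I' F" by (auto simp: vin_def)

lemma L_Delta: "L g (F * DeltaD I) = L (\<lambda>\<alpha>. \<Sum>i\<in>I. g (\<alpha> + sg i 1)) F"
  unfolding DeltaD_def sum_distrib_left L_sum L_Var
  by (simp add: L_def sum_distrib_left) (rule sum.swap)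

lemma L_mDelta: "L g (F * (- DeltaD I)) = - L (\<lambda>\<alpha>. \<Sum>i\<in>I. g (\<alpha> + sg i 1)) F"
  by (simp add: L_neg L_Delta)

lemma w_sum_step:
  assumes "finite I" "ks \<alpha> \<subseteq> I"
  shows "(\<Sum>i\<in>I. w m (\<alpha> + sg i 1)) = - (of_int (\<Sum>i\<in>I. m i) - of_nat (dg \<alpha>)) * (w m \<alpha> :: 'k::comm_ring_1)"
proof -
  have "(\<Sum>i\<in>I. w m (\<alpha> + sg i 1)) = (\<Sum>i\<in>I. - (of_int (m i) - of_nat (lk \<alpha> i)) * (w m \<alpha> :: 'k))"
    by (simp only: w_step)
  also have "\<dots> = - ((\<Sum>i\<in>I. of_int (m i)) - (\<Sum>i\<in>I. of_nat (lk \<alpha> i))) * w m \<alpha>"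
    by (simp add: sum_distrib_right[symmetric] sum_subtractf sum_negf)
  finally show ?thesis
    using assms by (simp add: dg_superset[of I] of_nat_sum)
qed

definition rho :: "(nat \<Rightarrow> int) \<Rightarrow> 'k::comm_ring_1 mpoly \<Rightarrow> int \<Rightarrow> 'k" where
  "rho m F J = L (\<lambda>\<alpha>. if int (dg \<alpha>) = J then w m \<alpha> else 0) F"

lemma "(if int (dg \<alpha>) = J then w m \<alpha> * ff (of_int (sum m I) - of_nat (dg \<alpha>)) 0 else 0) = (if int (dg \<alpha>) = J then (w m \<alpha>::'a::comm_ring_1) else 0)"
  by simp
lemma L_negf: "L (\<lambda>\<alpha>. - g \<alpha>) F = - L g F" by (simp add: L_def sum_negf)

lemma rho_pow:
  fixes F :: "'k::comm_ring_1 mpoly"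
  assumes "finite I" "vin I F"
  shows "rho m (F * (- DeltaD I) ^ s) J =
    L (\<lambda>\<alpha>. if int (dg \<alpha>) + int s = J then w m \<alpha> * ff (of_int (\<Sum>i\<in>I. m i) - of_nat (dg \<alpha>)) s else 0) F"
  using assms(2)
proof (induction s arbitrary: F)
  case 0
  then show ?case unfolding rho_def apply (simp only: power_0 mult_1_right)
    apply (rule L_cong) apply simp done
next
  case (Suc s)
  define MI :: 'k where "MI = of_int (\<Sum>i\<in>I. m i)"
  define h where "h = (\<lambda>\<alpha>. if int (dg \<alpha>) + int s = J then w m \<alpha> * ff (MI - of_nat (dg \<alpha>)) s else 0)"
  define tg where "tg = (\<lambda>\<alpha>. if int (dg \<alpha>) + int (Suc s) = J then w m \<alpha> * ff (MI - of_nat (dg \<alpha>)) (Suc s) else 0)"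
  have v: "vin I (F * - DeltaD I)" by (intro vin_mult vin_neg vin_DeltaD Suc.prems)
  have eq: "F * (- DeltaD I) ^ Suc s = (F * - DeltaD I) * (- DeltaD I) ^ s" by (simp add: algebra_simps)
  have "rho m (F * (- DeltaD I) ^ Suc s) J = L h (F * - DeltaD I)"
    unfolding eq h_def MI_def by (rule Suc.IH[OF v])
  also have "\<dots> = - L (\<lambda>\<alpha>. \<Sum>i\<in>I. h (\<alpha> + sg i 1)) F" by (rule L_mDelta)
  also have "L (\<lambda>\<alpha>. \<Sum>i\<in>I. h (\<alpha> + sg i 1)) F = L (\<lambda>\<alpha>. - tg \<alpha>) F"
  proof (rule L_cong)
    fix \<alpha> assume a: "\<alpha> \<in> ks F"
    then have ka: "ks \<alpha> \<subseteq> I" using Suc.prems by (auto simp: vin_def)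
    have "(\<Sum>i\<in>I. h (\<alpha> + sg i 1)) = (\<Sum>i\<in>I. if int (dg \<alpha>) + int (Suc s) = J then w m (\<alpha> + sg i 1) * ff (MI - of_nat (dg \<alpha>) - 1) s else 0)"
      unfolding h_def by (intro sum.cong) (auto simp: dg_add algebra_simps)
    also have "\<dots> = (if int (dg \<alpha>) + int (Suc s) = J then (\<Sum>i\<in>I. w m (\<alpha> + sg i 1)) * ff (MI - of_nat (dg \<alpha>) - 1) s else 0)"
      by (simp add: sum_distrib_right)
    also have "\<dots> = - tg \<alpha>"
      unfolding tg_def w_sum_step[OF assms(1) ka] MI_def[symmetric] by (simp add: ff_Suc algebra_simps)
    finally show "(\<Sum>i\<in>I. h (\<alpha> + sg i 1)) = - tg \<alpha>" .
  qed
  finally show ?case unfolding L_negf tg_def MI_def by simp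
qed

lemma rho_mult:
  assumes "vin I X" "vin I' G" "I \<inter> I' = {}"
  shows "rho m (X * G) J = (\<Sum>\<beta>\<in>ks G. lk G \<beta> * w m \<beta> * rho m X (J - int (dg \<beta>)))"
proof -
  have "rho m (X * G) J = (\<Sum>\<gamma>\<in>ks X. \<Sum>\<beta>\<in>ks G. lk X \<gamma> * lk G \<beta> *
      (if int (dg \<gamma>) = J - int (dg \<beta>) then w m \<gamma> else 0) * w m \<beta>)"
    unfolding rho_def L_mult
  proof (intro sum.cong refl)
    fix \<gamma> \<beta> assume "\<gamma> \<in> ks X" "\<beta> \<in> ks G"
    then have "ks \<gamma> \<inter> ks \<beta> = {}" using assms unfolding vin_def by blast
    then show "lk X \<gamma> * lk G \<beta> * (if int (dg (\<gamma> + \<beta>)) = J then w m (\<gamma> + \<beta>) else 0) =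
      lk X \<gamma> * lk G \<beta> * (if int (dg \<gamma>) = J - int (dg \<beta>) then w m \<gamma> else 0) * w m \<beta>"
      by (auto simp: dg_add w_add_disj)
  qed
  also have "\<dots> = (\<Sum>\<beta>\<in>ks G. lk G \<beta> * w m \<beta> * rho m X (J - int (dg \<beta>)))"
    by (subst sum.swap) (simp add: rho_def L_def sum_distrib_left sum_distrib_right algebra_simps)
  finally show ?thesis .
qed

lemma rho_Cst: "rho m (Cst c * F) J = c * rho m F J"
  by (simp add: rho_def L_Cst)

lemma canonC_Nil[simp]: "canonC [] = (\<lambda>_. 0)" by (simp add: canonC_def)
lemma canonC_Cons: "canonC ((q, b) # X) k = (if q = k then b else 0) + canonC X k"
  by (simp add: canonC_def)
lemma canonC_append: "canonC (X @ Y) k = canonC X k + canonC Y k"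
  by (simp add: canonC_def)

lemma canonC_out: "k \<notin> fst ` set X \<Longrightarrow> canonC X k = 0"
  by (induction X) (auto simp: canonC_Cons)

lemma G_lemma:
  fixes G :: "int \<Rightarrow> 'c::ab_group_add \<Rightarrow> 'v::ab_group_add"
  assumes add: "\<And>p a b. G p (a + b) = G p a + G p b" and fin: "finite P" and sub: "fst ` set X \<subseteq> P"
  shows "sum_list (map (\<lambda>(p, a). G p a) X) = (\<Sum>p\<in>P. G p (canonC X p))"
  using sub
proof (induction X)
  case Nil
  have "G p 0 = 0" for p using add[of p 0 0] by simp
  then show ?case by simp
next
  case (Cons x X)
  obtain q b where x: "x = (q, b)" by force
  have z: "G p 0 = 0" for p using add[of p 0 0] by simp
  have q: "q \<in> P" using Cons.prems x by auto
  have "(\<Sum>p\<in>P. G p (canonC (x # X) p)) = (\<Sum>p\<in>P. G p (if q = p then b else 0)) + (\<Sum>p\<in>P. G p (canonC X p))"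
    by (simp add: x canonC_Cons add sum.distrib)
  also have "(\<Sum>p\<in>P. G p (if q = p then b else 0)) = G q b"
    using q fin by (simp add: z if_distrib[of "G _"] cong: if_cong)
  finally show ?case using Cons by (simp add: x)
qed

locale CA =
  fixes sm :: "'k::field_char_0 \<Rightarrow> 'c::ab_group_add \<Rightarrow> 'c"
    and D :: "'c \<Rightarrow> 'c"
    and cp :: "nat \<Rightarrow> 'c \<Rightarrow> 'c \<Rightarrow> 'c"
  assumes ca: "conformal_algebra sm D cp"
begin

sublocale vector_space sm using ca by (simp add: conformal_algebra_def)

lemma D_add: "D (x + y) = D x + D y" using ca by (simp add: conformal_algebra_def)
lemma D_sm: "D (sm k x) = sm k (D x)" using ca by (simp add: conformal_algebra_def)
lemma cp_addl: "cp n (x + y) b = cp n x b + cp n y b" using ca by (simp add: conformal_algebra_def)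
lemma cp_addr: "cp n a (x + y) = cp n a x + cp n a y" using ca by (simp add: conformal_algebra_def)
lemma cp_sml: "cp n (sm k a) b = sm k (cp n a b)" using ca by (simp add: conformal_algebra_def)
lemma cp_smr: "cp n a (sm k b) = sm k (cp n a b)" using ca by (simp add: conformal_algebra_def)
lemma cp_loc: "\<exists>N. \<forall>n\<ge>N. cp n a b = 0" using ca by (simp add: conformal_algebra_def)

lemma cp_0l[simp]: "cp n 0 b = 0" using cp_addl[of n 0 0 b] by simp
lemma cp_0r[simp]: "cp n a 0 = 0" using cp_addr[of n a 0 0] by simp

lemma lb_zero: "lbound cp a b \<le> s \<Longrightarrow> cp s a b = 0"
  unfolding lbound_def using LeastI_ex[OF cp_loc[of a b]] by blast

lemma lb_le: "(\<forall>s\<ge>N. cp s a b = 0) \<Longrightarrow> lbound cp a b \<le> N"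
  unfolding lbound_def by (rule Least_le) simp

lemma lb_sum:
  assumes "\<forall>s\<ge>N. cp s a b = 0" "\<And>s. h s 0 = 0"
  shows "(\<Sum>s<lbound cp a b. h s (cp s a b)) = (\<Sum>s<N. h s (cp s a b))"
  using lb_le[OF assms(1)] assms(2) lb_zero
  by (intro sum.mono_neutral_left) auto

definition pairC :: "int \<Rightarrow> 'c \<Rightarrow> int \<Rightarrow> 'c \<Rightarrow> int \<Rightarrow> 'c" where
  "pairC p a q b k = (\<Sum>s<lbound cp a b. if p + q - int s = k then sm ((of_int p :: 'k) gchoose s) (cp s a b) else 0)"

lemma pairC_N:
  assumes "\<forall>s\<ge>N. cp s a b = 0"
  shows "pairC p a q b k = (\<Sum>s<N. if p + q - int s = k then sm ((of_int p :: 'k) gchoose s) (cp s a b) else 0)"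
  unfolding pairC_def by (rule lb_sum[OF assms, where h = "\<lambda>s c. if p + q - int s = k then sm ((of_int p :: 'k) gchoose s) c else 0"]) simp

lemma pairC_addl: "pairC p (a1 + a2) q b k = pairC p a1 q b k + pairC p a2 q b k"
proof -
  define N where "N = max (lbound cp a1 b) (lbound cp a2 b)"
  have z: "\<forall>s\<ge>N. cp s a1 b = 0" "\<forall>s\<ge>N. cp s a2 b = 0" "\<forall>s\<ge>N. cp s (a1+a2) b = 0"
    by (auto simp: N_def lb_zero cp_addl)
  show ?thesis unfolding pairC_N[OF z(1)] pairC_N[OF z(2)] pairC_N[OF z(3)]
    by (simp add: cp_addl scale_right_distrib sum.distrib[symmetric] if_distrib cong: if_cong)
qed

lemma pairC_addr: "pairC p a q (b1 + b2) k = pairC p a q b1 k + pairC p a q b2 k"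
proof -
  define N where "N = max (lbound cp a b1) (lbound cp a b2)"
  have z: "\<forall>s\<ge>N. cp s a b1 = 0" "\<forall>s\<ge>N. cp s a b2 = 0" "\<forall>s\<ge>N. cp s a (b1+b2) = 0"
    by (auto simp: N_def lb_zero cp_addr)
  show ?thesis unfolding pairC_N[OF z(1)] pairC_N[OF z(2)] pairC_N[OF z(3)]
    by (simp add: cp_addr scale_right_distrib sum.distrib[symmetric] if_distrib cong: if_cong)
qed

lemma canonC_cmul_list:
  "canonC (cmul sm cp X Y) k = sum_list (map (\<lambda>(p, a). sum_list (map (\<lambda>(q, b). pairC p a q b k) Y)) X)"
proof (induction X)
  case Nil
  then show ?case by (simp add: cmul_def)
next
  case (Cons x X)
  obtain p a where x: "x = (p, a)" by force
  have "canonC (concat (map (\<lambda>(m, b). map (\<lambda>s. (p + m - int s, sm ((of_int p :: 'k) gchoose s) (cp s a b))) [0..<lbound cp a b]) Y)) k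
     = sum_list (map (\<lambda>(q, b). pairC p a q b k) Y)"
  proof (induction Y)
    case Nil
    then show ?case by simp
  next
    case (Cons y Y)
    obtain q b where y: "y = (q, b)" by force
    have "canonC (map (\<lambda>s. (p + q - int s, sm ((of_int p :: 'k) gchoose s) (cp s a b))) [0..<lbound cp a b]) k = pairC p a q b k"
      unfolding pairC_def canonC_def
      by (simp add: comp_def sum_list_sum_nth atLeast0LessThan) (rule sum.cong, auto)
    then show ?case using Cons by (simp add: y canonC_append)
  qed
  then show ?case using Cons by (simp add: x cmul_def canonC_append)
qed

lemma pairC_0l[simp]: "pairC p 0 q b k = 0" using pairC_addl[of p 0 0 q b k] by simp

lemma canonC_cmul_sets:
  assumes "finite P" "fst ` set X \<subseteq> P" "finite Q" "fst ` set Y \<subseteq> Q"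
  shows "canonC (cmul sm cp X Y) k = (\<Sum>p\<in>P. \<Sum>q\<in>Q. pairC p (canonC X p) q (canonC Y q) k)"
proof -
  have inner: "sum_list (map (\<lambda>(q, b). pairC p a q b k) Y) = (\<Sum>q\<in>Q. pairC p a q (canonC Y q) k)" for p a
    by (rule G_lemma[OF _ assms(3,4)]) (rule pairC_addr)
  have "canonC (cmul sm cp X Y) k = sum_list (map (\<lambda>(p, a). \<Sum>q\<in>Q. pairC p a q (canonC Y q) k) X)"
    unfolding canonC_cmul_list inner ..
  also have "\<dots> = (\<Sum>p\<in>P. \<Sum>q\<in>Q. pairC p (canonC X p) q (canonC Y q) k)"
    by (rule G_lemma[OF _ assms(1,2)]) (simp add: pairC_addl sum.distrib)
  finally show ?thesis .
qed

lemma cmul_cong: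
  assumes "canonC X = canonC X'" "canonC Y = canonC Y'"
  shows "canonC (cmul sm cp X Y) = canonC (cmul sm cp X' Y')"
proof
  fix k
  let ?P = "fst ` set X \<union> fst ` set X'" and ?Q = "fst ` set Y \<union> fst ` set Y'"
  show "canonC (cmul sm cp X Y) k = canonC (cmul sm cp X' Y') k"
    using canonC_cmul_sets[of ?P X ?Q Y k] canonC_cmul_sets[of ?P X' ?Q Y' k] assms by simp
qed

lemma cmul_addl:
  assumes "\<And>k. canonC X k = canonC X1 k + canonC X2 k"
  shows "canonC (cmul sm cp X Y) k = canonC (cmul sm cp X1 Y) k + canonC (cmul sm cp X2 Y) k"
proof -
  let ?P = "fst ` set X \<union> fst ` set X1 \<union> fst ` set X2" and ?Q = "fst ` set Y"
  have a: "canonC (cmul sm cp X Y) k = (\<Sum>p\<in>?P. \<Sum>q\<in>?Q. pairC p (canonC X p) q (canonC Y q) k)"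
    "canonC (cmul sm cp X1 Y) k = (\<Sum>p\<in>?P. \<Sum>q\<in>?Q. pairC p (canonC X1 p) q (canonC Y q) k)"
    "canonC (cmul sm cp X2 Y) k = (\<Sum>p\<in>?P. \<Sum>q\<in>?Q. pairC p (canonC X2 p) q (canonC Y q) k)"
    by (rule canonC_cmul_sets; auto)+
  show ?thesis unfolding a assms by (simp add: pairC_addl sum.distrib)
qed

lemma cmul_addr:
  assumes "\<And>k. canonC Y k = canonC Y1 k + canonC Y2 k"
  shows "canonC (cmul sm cp X Y) k = canonC (cmul sm cp X Y1) k + canonC (cmul sm cp X Y2) k"
proof -
  let ?Q = "fst ` set Y \<union> fst ` set Y1 \<union> fst ` set Y2" and ?P = "fst ` set X"
  have a: "canonC (cmul sm cp X Y) k = (\<Sum>p\<in>?P. \<Sum>q\<in>?Q. pairC p (canonC X p) q (canonC Y q) k)"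
    "canonC (cmul sm cp X Y1) k = (\<Sum>p\<in>?P. \<Sum>q\<in>?Q. pairC p (canonC X p) q (canonC Y1 q) k)"
    "canonC (cmul sm cp X Y2) k = (\<Sum>p\<in>?P. \<Sum>q\<in>?Q. pairC p (canonC X p) q (canonC Y2 q) k)"
    by (rule canonC_cmul_sets; auto)+
  show ?thesis unfolding a assms by (simp add: pairC_addr sum.distrib)
qed

lemma cmul_zl:
  assumes "\<And>k. canonC X k = 0"
  shows "canonC (cmul sm cp X Y) k = 0"
  using canonC_cmul_sets[of "fst ` set X" X "fst ` set Y" Y k] assms by simp

lemma cmul_zr:
  assumes "\<And>k. canonC Y k = 0"
  shows "canonC (cmul sm cp X Y) k = 0"
proof -
  have "pairC p a q 0 k = 0" for p a q using pairC_addr[of p a q 0 0 k] by simp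
  then show ?thesis using canonC_cmul_sets[of "fst ` set X" X "fst ` set Y" Y k] assms by simp
qed

lemma evalC_add:
  "length xs = nleaves t \<Longrightarrow> j < nleaves t \<Longrightarrow>
   canonC (evalC sm cp t (xs[j := X1 @ X2])) k = canonC (evalC sm cp t (xs[j := X1])) k + canonC (evalC sm cp t (xs[j := X2])) k"
proof (induction t arbitrary: xs j k)
  case Lf
  then show ?case by (cases xs) (auto simp: canonC_append)
next
  case (Nd l r)
  show ?case
  proof (cases "j < nleaves l")
    case True
    then show ?thesis using Nd by (simp add: take_update_swap cmul_addl)
  next
    case False
    then show ?thesis using Nd by (simp add: drop_update_swap cmul_addr)
  qed
qed

lemma evalC_zero:
  "length xs = nleaves t \<Longrightarrow> j < nleaves t \<Longrightarrow> canonC (evalC sm cp t (xs[j := []])) k = 0"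
proof (induction t arbitrary: xs j k)
  case Lf
  then show ?case by (cases xs) auto
next
  case (Nd l r)
  show ?case
  proof (cases "j < nleaves l")
    case True
    then show ?thesis using Nd by (simp add: take_update_swap cmul_zl)
  next
    case False
    then show ?thesis using Nd by (simp add: drop_update_swap cmul_zr)
  qed
qed

end

lemma ff_gchoose: "(x::'k::field_char_0) gchoose s = ff x s / fact s"
  by (simp add: gbinomial_prod_rev ff_def atLeast0LessThan)

lemma rho_scalar:
  fixes F G :: "'k::field_char_0 mpoly"
  assumes "finite I" "vin I F" "vin I' G" "I \<inter> I' = {}"
  shows "rho m (F * G * Cst (1 / fact s) * (- DeltaD I) ^ s) J =
    (\<Sum>\<alpha>\<in>ks F. \<Sum>\<beta>\<in>ks G. if int (dg \<alpha>) + int (dg \<beta>) + int s = J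
        then ((of_int (\<Sum>i\<in>I. m i) - of_nat (dg \<alpha>)) gchoose s) * (lk F \<alpha> * w m \<alpha> * (lk G \<beta> * w m \<beta>)) else 0)"
proof -
  have eq: "F * G * Cst (1 / fact s) * (- DeltaD I) ^ s = Cst (1 / fact s) * ((F * (- DeltaD I) ^ s) * G)"
    by (simp add: algebra_simps)
  have v: "vin I (F * (- DeltaD I) ^ s)" by (intro vin_mult vin_pow vin_neg vin_DeltaD assms)
  have "rho m (F * G * Cst (1 / fact s) * (- DeltaD I) ^ s) J =
     1 / fact s * (\<Sum>\<beta>\<in>ks G. lk G \<beta> * w m \<beta> * rho m (F * (- DeltaD I) ^ s) (J - int (dg \<beta>)))"
    unfolding eq rho_Cst rho_mult[OF v assms(3,4)] ..
  also have "\<dots> = 1 / fact s * (\<Sum>\<beta>\<in>ks G. lk G \<beta> * w m \<beta> * (\<Sum>\<alpha>\<in>ks F. lk F \<alpha> *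
     (if int (dg \<alpha>) + int s = J - int (dg \<beta>) then w m \<alpha> * ff (of_int (\<Sum>i\<in>I. m i) - of_nat (dg \<alpha>)) s else 0)))"
    unfolding rho_pow[OF assms(1,2)] L_def ..
  also have "\<dots> = (\<Sum>\<alpha>\<in>ks F. \<Sum>\<beta>\<in>ks G. if int (dg \<alpha>) + int (dg \<beta>) + int s = J
        then ((of_int (\<Sum>i\<in>I. m i) - of_nat (dg \<alpha>)) gchoose s) * (lk F \<alpha> * w m \<alpha> * (lk G \<beta> * w m \<beta>)) else 0)"
    unfolding ff_gchoose
    by (subst sum.swap) (auto simp: sum_distrib_left intro!: sum.cong simp: algebra_simps)
  finally show ?thesis .
qed

lemma sum_list_map_concat: "sum_list (map f (concat XS)) = sum_list (map (\<lambda>X. sum_list (map f X)) XS)"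
  by (induction XS) auto

lemma sum_list_map_upt: "sum_list (map f [0..<n]) = (\<Sum>i<n. f i)"
  by (induction n) auto

lemma sum_list_swap:
  fixes f :: "'a \<Rightarrow> 'b \<Rightarrow> 'c::comm_monoid_add"
  shows "sum_list (map (\<lambda>x. sum_list (map (f x) ys)) xs) = sum_list (map (\<lambda>y. sum_list (map (\<lambda>x. f x y) xs)) ys)"
  by (induction xs) (auto simp: sum_list_addf)

lemma sum_list_sorted: "finite S \<Longrightarrow> sum_list (map f (sorted_list_of_set S)) = sum f S"
  by (simp add: sum_list_distinct_conv_sum_set)

context CA begin

definition Ev :: "(nat \<Rightarrow> int) \<Rightarrow> int \<Rightarrow> ('k mpoly \<times> 'c) list \<Rightarrow> int \<Rightarrow> 'c" where
  "Ev m M X k = sum_list (map (\<lambda>(F, c). sm (rho m F (M - k)) c) X)"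

definition evl1 :: "(nat \<Rightarrow> int) \<Rightarrow> int \<Rightarrow> 'k mpoly \<Rightarrow> 'c \<Rightarrow> (int \<times> 'c) list" where
  "evl1 m M F c = map (\<lambda>\<alpha>. (M - int (dg \<alpha>), sm (lk F \<alpha> * w m \<alpha>) c)) (sorted_list_of_set (ks F))"

definition evl :: "(nat \<Rightarrow> int) \<Rightarrow> int \<Rightarrow> ('k mpoly \<times> 'c) list \<Rightarrow> (int \<times> 'c) list" where
  "evl m M X = concat (map (\<lambda>(F, c). evl1 m M F c) X)"

lemma canonC_evl1: "canonC (evl1 m M F c) k = sm (rho m F (M - k)) c"
proof -
  have "canonC (evl1 m M F c) k = (\<Sum>\<alpha>\<in>ks F. if M - int (dg \<alpha>) = k then sm (lk F \<alpha> * w m \<alpha>) c else 0)"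
    unfolding evl1_def canonC_def by (simp add: comp_def sum_list_sorted)
  also have "\<dots> = sm (\<Sum>\<alpha>\<in>ks F. lk F \<alpha> * (if int (dg \<alpha>) = M - k then w m \<alpha> else 0)) c"
    by (simp add: scale_sum_left) (rule sum.cong, auto)
  finally show ?thesis by (simp add: rho_def L_def)
qed

lemma canonC_evl: "canonC (evl m M X) k = Ev m M X k"
  by (induction X) (auto simp: evl_def Ev_def canonC_append canonC_evl1)

lemma canonC_concat: "canonC (concat XS) k = sum_list (map (\<lambda>X. canonC X k) XS)"
  by (induction XS) (auto simp: canonC_append)

lemma cmul_concat:
  "canonC (cmul sm cp (concat XS) (concat YS)) k = sum_list (map (\<lambda>X. sum_list (map (\<lambda>Y. canonC (cmul sm cp X Y) k) YS)) XS)"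
  unfolding canonC_cmul_list sum_list_map_concat
  by (simp add: split_def) (rule arg_cong[where f=sum_list], rule map_cong, rule refl, rule sum_list_swap)

lemma Ev_append: "Ev m M (X @ Y) k = Ev m M X k + Ev m M Y k"
  by (simp add: Ev_def)

lemma Ev_concat: "Ev m M (concat XS) k = sum_list (map (\<lambda>X. Ev m M X k) XS)"
  by (induction XS) (auto simp: Ev_append, simp add: Ev_def)

lemma pairC_sm:
  "pairC p (sm x c) q (sm y d) k = (\<Sum>s<lbound cp c d. if p + q - int s = k then sm (((of_int p :: 'k) gchoose s) * (x * y)) (cp s c d) else 0)"
proof -
  have z: "\<forall>s\<ge>lbound cp c d. cp s (sm x c) (sm y d) = 0" by (simp add: cp_sml cp_smr lb_zero)
  have "pairC p (sm x c) q (sm y d) k = (\<Sum>s<lbound cp c d. if p + q - int s = k then sm ((of_int p :: 'k) gchoose s) (cp s (sm x c) (sm y d)) else 0)"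
    by (rule pairC_N[OF z])
  also have "\<dots> = (\<Sum>s<lbound cp c d. if p + q - int s = k then sm (((of_int p :: 'k) gchoose s) * (x * y)) (cp s c d) else 0)"
    by (intro sum.cong refl) (simp add: cp_sml cp_smr mult.assoc)
  finally show ?thesis .
qed

lemma pair_single:
  assumes "finite I" "vin I F" "vin I' G" "I \<inter> I' = {}"
  shows "canonC (cmul sm cp (evl1 m (\<Sum>i\<in>I. m i) F c) (evl1 m Mr G d)) k =
    Ev m ((\<Sum>i\<in>I. m i) + Mr) (map (\<lambda>s. (F * G * Cst (1 / fact s) * (- DeltaD I) ^ s, cp s c d)) [0..<lbound cp c d]) k"
proof -
  have "canonC (cmul sm cp (evl1 m (\<Sum>i\<in>I. m i) F c) (evl1 m Mr G d)) k =
    (\<Sum>\<alpha>\<in>ks F. \<Sum>\<beta>\<in>ks G. pairC ((\<Sum>i\<in>I. m i) - int (dg \<alpha>)) (sm (lk F \<alpha> * w m \<alpha>) c) (Mr - int (dg \<beta>)) (sm (lk G \<beta> * w m \<beta>) d) k)"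
    unfolding canonC_cmul_list evl1_def by (simp add: comp_def sum_list_sorted)
  also have "\<dots> = (\<Sum>\<alpha>\<in>ks F. \<Sum>\<beta>\<in>ks G. \<Sum>s<lbound cp c d. sm (if int (dg \<alpha>) + int (dg \<beta>) + int s = (\<Sum>i\<in>I. m i) + Mr - k
        then ((of_int (\<Sum>i\<in>I. m i) - of_nat (dg \<alpha>)) gchoose s) * (lk F \<alpha> * w m \<alpha> * (lk G \<beta> * w m \<beta>)) else 0) (cp s c d))"
    unfolding pairC_sm by (intro sum.cong refl) auto
  also have "\<dots> = (\<Sum>s<lbound cp c d. sm (\<Sum>\<alpha>\<in>ks F. \<Sum>\<beta>\<in>ks G. if int (dg \<alpha>) + int (dg \<beta>) + int s = (\<Sum>i\<in>I. m i) + Mr - k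
        then ((of_int (\<Sum>i\<in>I. m i) - of_nat (dg \<alpha>)) gchoose s) * (lk F \<alpha> * w m \<alpha> * (lk G \<beta> * w m \<beta>)) else 0) (cp s c d))"
    by (simp add: scale_sum_left sum.swap[of _ "{..<lbound cp c d}"])
  also have "\<dots> = Ev m ((\<Sum>i\<in>I. m i) + Mr) (map (\<lambda>s. (F * G * Cst (1 / fact s) * (- DeltaD I) ^ s, cp s c d)) [0..<lbound cp c d]) k"
    by (simp add: Ev_def comp_def sum_list_map_upt rho_scalar[OF assms(1-4)])
  finally show ?thesis .
qed

end

lemma epp_mem:
  "x \<in> set (epp cp I X Y) \<Longrightarrow> \<exists>F c G d s. (F, c) \<in> set X \<and> (G, d) \<in> set Y \<and>
     x = (F * G * Cst (1 / fact s) * (- DeltaD I) ^ s, cp s c d)"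
  by (fastforce simp: epp_def)

lemma pstar_vin:
  "\<forall>x\<in>set (pstar cp off t bs :: ('k::field_char_0 mpoly \<times> 'c::zero) list). vin {off..<off + nleaves t} (fst x)"
proof (induction t arbitrary: off bs)
  case Lf
  then show ?case by simp
next
  case (Nd l r)
  show ?case
  proof
    fix x assume "x \<in> set (pstar cp off (Nd l r) bs :: ('k mpoly \<times> 'c) list)"
    then have "x \<in> set (epp cp {off..<off + nleaves l} (pstar cp off l (take (nleaves l) bs) :: ('k mpoly \<times> 'c) list)
        (pstar cp (off + nleaves l) r (drop (nleaves l) bs)))" by simp
    then obtain F c G d s where m: "(F, c) \<in> set (pstar cp off l (take (nleaves l) bs) :: ('k mpoly \<times> 'c) list)"
      "(G, d) \<in> set (pstar cp (off + nleaves l) r (drop (nleaves l) bs) :: ('k mpoly \<times> 'c) list)"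
      "x = (F * G * Cst (1 / fact s) * (- DeltaD {off..<off + nleaves l}) ^ s, cp s c d)"
      using epp_mem by blast
    have vF: "vin {off..<off + nleaves (Nd l r)} F"
      using Nd.IH(1)[of off "take (nleaves l) bs"] m(1) by (force intro: vin_mono)
    have vG: "vin {off..<off + nleaves (Nd l r)} G"
      using Nd.IH(2)[of "off + nleaves l" "drop (nleaves l) bs"] m(2) by (force intro: vin_mono)
    have vD: "vin {off..<off + nleaves (Nd l r)} (DeltaD {off..<off + nleaves l})"
      by (rule vin_mono[OF vin_DeltaD]) auto
    show "vin {off..<off + nleaves (Nd l r)} (fst x)"
      unfolding m(3) fst_conv by (intro vin_mult vin_pow vin_neg vF vG vD vin_Cst)
  qed
qed

context CA begin

lemma pstar_eval:
  "length bs = nleaves t \<Longrightarrow>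
   canonC (evalC sm cp t (map (\<lambda>i. [(m (off + i), bs ! i)]) [0..<nleaves t])) k =
   Ev m (\<Sum>i\<in>{off..<off + nleaves t}. m i) (pstar cp off t bs) k"
proof (induction t arbitrary: off bs k)
  case Lf
  then show ?case by (simp add: Ev_def canonC_def rho_def)
next
  case (Nd l r)
  define nl where "nl = nleaves l"
  define nr where "nr = nleaves r"
  define Ml where "Ml = (\<Sum>i\<in>{off..<off + nl}. m i)"
  define Mr where "Mr = (\<Sum>i\<in>{off + nl..<off + nl + nr}. m i)"
  define Pl :: "('k mpoly \<times> 'c) list" where "Pl = pstar cp off l (take nl bs)"
  define Pr :: "('k mpoly \<times> 'c) list" where "Pr = pstar cp (off + nl) r (drop nl bs)"
  have len: "length bs = nl + nr" using Nd.prems by (simp add: nl_def nr_def)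
  have tk: "take nl (map (\<lambda>i. [(m (off + i), bs ! i)]) [0..<nl + nr]) = map (\<lambda>i. [(m (off + i), take nl bs ! i)]) [0..<nl]"
    by (rule nth_equalityI) (auto simp: len)
  have dr: "drop nl (map (\<lambda>i. [(m (off + i), bs ! i)]) [0..<nl + nr]) = map (\<lambda>i. [(m (off + nl + i), drop nl bs ! i)]) [0..<nr]"
    by (rule nth_equalityI) (auto simp: len add.assoc)
  have IHl: "canonC (evalC sm cp l (map (\<lambda>i. [(m (off + i), take nl bs ! i)]) [0..<nl])) = canonC (evl m Ml Pl)"
    using Nd.IH(1)[of "take nl bs" off] len by (auto simp: canonC_evl Ml_def Pl_def nl_def)
  have IHr: "canonC (evalC sm cp r (map (\<lambda>i. [(m (off + nl + i), drop nl bs ! i)]) [0..<nr])) = canonC (evl m Mr Pr)"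
    using Nd.IH(2)[of "drop nl bs" "off + nl"] len by (auto simp: canonC_evl Mr_def Pr_def nr_def)
  have vl: "\<forall>x\<in>set Pl. vin {off..<off + nl} (fst x)" using pstar_vin unfolding Pl_def nl_def by blast
  have vr: "\<forall>x\<in>set Pr. vin {off + nl..<off + nl + nr} (fst x)" using pstar_vin unfolding Pr_def nr_def by blast
  have "canonC (evalC sm cp (Nd l r) (map (\<lambda>i. [(m (off + i), bs ! i)]) [0..<nleaves (Nd l r)])) k
      = canonC (cmul sm cp (evl m Ml Pl) (evl m Mr Pr)) k"
    using cmul_cong[OF IHl IHr] by (simp add: nl_def[symmetric] nr_def[symmetric] tk dr)
  also have "\<dots> = sum_list (map (\<lambda>(F, c). sum_list (map (\<lambda>(G, d).
       Ev m (Ml + Mr) (map (\<lambda>s. (F * G * Cst (1 / fact s) * (- DeltaD {off..<off + nl}) ^ s, cp s c d)) [0..<lbound cp c d]) k) Pr)) Pl)"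
    unfolding evl_def cmul_concat Ml_def
    apply (simp add: comp_def split_def)
    apply (intro arg_cong[where f=sum_list] map_cong refl)
    apply (rule pair_single)
    using vl vr by (auto simp: nl_def)
  also have "\<dots> = Ev m (Ml + Mr) (pstar cp off (Nd l r) bs) k"
    by (simp add: Pl_def Pr_def nl_def epp_def Ev_concat comp_def split_def)
  also have "Ml + Mr = (\<Sum>i\<in>{off..<off + nleaves (Nd l r)}. m i)"
    unfolding Ml_def Mr_def by (simp add: nl_def nr_def sum.atLeastLessThan_concat add.assoc)
  finally show ?case .
qed

end

lemma uvb_vin: "uses_vars_below N F \<Longrightarrow> vin {..<N} F"
  by (auto simp: uses_vars_below_def vin_def)

lemma rho_Delta:
  fixes F :: "'k::comm_ring_1 mpoly"
  assumes "vin {..<n} F"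
  shows "rho m (F * DeltaD {..<n}) J = - ((of_int (\<Sum>i<n. m i) - of_int (J - 1)) * rho m F (J - 1))"
proof -
  have "rho m (F * DeltaD {..<n}) J = - rho m (F * (- DeltaD {..<n}) ^ 1) J"
    by (simp add: rho_def L_neg)
  also have "rho m (F * (- DeltaD {..<n}) ^ 1) J = L (\<lambda>\<alpha>. if int (dg \<alpha>) + int 1 = J then w m \<alpha> * ff (of_int (\<Sum>i<n. m i) - of_nat (dg \<alpha>)) 1 else 0) F"
    using rho_pow[OF _ assms, of m 1 J] by simp
  also have "\<dots> = (of_int (\<Sum>i<n. m i) - of_int (J - 1)) * rho m F (J - 1)"
    unfolding rho_def L_def sum_distrib_left
    by (intro sum.cong refl) (auto simp: ff_def algebra_simps)
  finally show ?thesis .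
qed

context CA begin

definition Psi :: "(nat \<Rightarrow> int) \<Rightarrow> int \<Rightarrow> (nat \<Rightarrow>\<^sub>0 nat) set \<Rightarrow> ((nat \<Rightarrow>\<^sub>0 nat) \<Rightarrow> 'c) \<Rightarrow> int \<Rightarrow> 'c" where
  "Psi m M S T k = (\<Sum>\<alpha>\<in>S. if M - int (dg \<alpha>) = k then sm (w m \<alpha>) (T \<alpha>) else 0)"

lemma Psi_superset:
  assumes "finite S'" "S \<subseteq> S'" "\<And>\<alpha>. \<alpha> \<notin> S \<Longrightarrow> T \<alpha> = 0"
  shows "Psi m M S' T = Psi m M S T"
  unfolding Psi_def using assms by (intro ext sum.mono_neutral_right) auto

lemma crel_sum:
  "finite A \<Longrightarrow> (\<And>j. j \<in> A \<Longrightarrow> f j \<in> crel sm D) \<Longrightarrow> (\<lambda>k. \<Sum>j\<in>A. f j k) \<in> crel sm D"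
proof (induction A rule: finite_induct)
  case empty
  then show ?case using crel_zero by simp
next
  case (insert x F)
  have "(\<lambda>k. \<Sum>j\<in>insert x F. f j k) = f x + (\<lambda>k. \<Sum>j\<in>F. f j k)"
    using insert by (auto simp: fun_eq_iff)
  then show ?case using insert by (auto intro: crel_add)
qed

lemma hrel_gen_crel:
  fixes F :: "'k mpoly" and c :: 'c and m :: "nat \<Rightarrow> int"
  assumes "uses_vars_below n F"
  defines "T \<equiv> canon sm [(F * DeltaD {..<n}, c)] - canon sm [(F, D c)]"
  defines "M \<equiv> (\<Sum>i<n. m i)"
  shows "Psi m M (ks (F * DeltaD {..<n}) \<union> ks F) T \<in> crel sm D"
proof -
  let ?S = "ks (F * DeltaD {..<n}) \<union> ks F"
  have v: "vin {..<n} F" using assms(1) by (rule uvb_vin)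
  have fin: "finite ?S" by simp
  have T: "T \<alpha> = sm (lk (F * DeltaD {..<n}) \<alpha>) c - sm (lk F \<alpha>) (D c)" for \<alpha>
    by (simp add: T_def canon_def)
  have rhoS: "rho m G J = (\<Sum>\<alpha>\<in>?S. lk G \<alpha> * (if int (dg \<alpha>) = J then w m \<alpha> else 0))"
    if "ks G \<subseteq> ?S" for G J
    unfolding rho_def using that by (rule L_superset[OF fin])
  have P: "Psi m M ?S T k = sm (rho m (F * DeltaD {..<n}) (M - k)) c - sm (rho m F (M - k)) (D c)" for k
    unfolding Psi_def T rhoS[OF Un_upper1] rhoS[OF Un_upper2]
    by (simp add: scale_sum_left sum_subtractf[symmetric] scale_right_diff_distrib if_distrib[of "\<lambda>x. sm x _"]
        algebra_simps cong: if_cong) (intro sum.cong refl, auto simp: algebra_simps)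
  define Js where "Js = (\<lambda>\<alpha>. int (dg \<alpha>)) ` ks F"
  have rz: "rho m F j = 0" if "j \<notin> Js" for j
    unfolding rho_def L_def using that by (intro sum.neutral) (auto simp: Js_def)
  define Z where "Z = (\<lambda>k. \<Sum>j\<in>Js. sm (- rho m F j) (canonC [(M - j, D c), (M - j - 1, sm (of_int (M - j)) c)] k))"
  have "Z \<in> crel sm D"
    unfolding Z_def apply (rule crel_sum) apply (simp add: Js_def) by (rule crel_smul[OF crel_gen])
  moreover have "Z = Psi m M ?S T"
  proof
    fix k
    have "Z k = (\<Sum>j\<in>Js. (if M - j = k then sm (- rho m F j) (D c) else 0) +
                           (if M - j - 1 = k then sm (- rho m F j * of_int (M - j)) c else 0))"
      unfolding Z_def canonC_def by (intro sum.cong refl) (auto simp: scale_right_distrib)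
    also have "\<dots> = (if M - k \<in> Js then sm (- rho m F (M - k)) (D c) else 0) +
        (if M - k - 1 \<in> Js then sm (- rho m F (M - k - 1) * of_int (k + 1)) c else 0)"
    proof -
      have a: "(\<Sum>j\<in>Js. if M - j = k then sm (- rho m F j) (D c) else 0) = (\<Sum>j\<in>Js. if j = M - k then sm (- rho m F j) (D c) else 0)"
        by (intro sum.cong refl) auto
      have b: "(\<Sum>j\<in>Js. if M - j - 1 = k then sm (- rho m F j * of_int (M - j)) c else 0) =
               (\<Sum>j\<in>Js. if j = M - k - 1 then sm (- rho m F j * of_int (M - j)) c else 0)"
        by (intro sum.cong refl) auto
      show ?thesis unfolding sum.distrib a b by (simp add: Js_def)
    qed
    also have "\<dots> = sm (- rho m F (M - k)) (D c) + sm (- rho m F (M - k - 1) * of_int (k + 1)) c"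
      using rz by auto
    also have "\<dots> = Psi m M ?S T k"
      unfolding P rho_Delta[OF v] M_def[symmetric] by (simp add: algebra_simps)
    finally show "Z k = Psi m M ?S T k" .
  qed
  ultimately show ?thesis by simp
qed

end

context CA begin

lemma Psi_add: "Psi m M S (x + y) k = Psi m M S x k + Psi m M S y k"
  unfolding Psi_def by (simp add: sum.distrib[symmetric] scale_right_distrib) (intro sum.cong refl, auto simp: scale_right_distrib)

lemma Psi_sm: "Psi m M S (\<lambda>\<alpha>. sm c (x \<alpha>)) k = sm c (Psi m M S x k)"
  unfolding Psi_def by (simp add: scale_sum_right if_distrib[of "sm c"] scale_left_commute cong: if_cong)
    (intro sum.cong refl, simp add: mult.commute)

lemma hrel_Psi:
  "T \<in> hrel sm D n \<Longrightarrow> \<exists>S. finite S \<and> (\<forall>\<alpha>. \<alpha> \<notin> S \<longrightarrow> T \<alpha> = 0) \<and> Psi m (\<Sum>i<n. m i) S T \<in> crel sm D"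
proof (induction T rule: hrel.induct)
  case hrel_zero
  have "Psi m (\<Sum>i<n. m i) {} (\<lambda>_. 0) = (\<lambda>_. 0)" by (simp add: Psi_def fun_eq_iff)
  then show ?case using crel_zero by (intro exI[of _ "{}"]) auto
next
  case (hrel_gen F c)
  let ?S = "ks (F * DeltaD {..<n}) \<union> ks F"
  have "\<forall>\<alpha>. \<alpha> \<notin> ?S \<longrightarrow> (canon sm [(F * DeltaD {..<n}, c)] - canon sm [(F, D c)]) \<alpha> = 0"
    by (auto simp: canon_def in_keys_iff)
  moreover have "Psi m (\<Sum>i<n. m i) ?S (canon sm [(F * DeltaD {..<n}, c)] - canon sm [(F, D c)]) \<in> crel sm D"
    by (rule hrel_gen_crel[OF hrel_gen(1)])
  moreover have "finite ?S" by simp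
  ultimately show ?case by blast
next
  case (hrel_add x y)
  then obtain S1 S2 where s1: "finite S1" "\<forall>\<alpha>. \<alpha> \<notin> S1 \<longrightarrow> x \<alpha> = 0" "Psi m (\<Sum>i<n. m i) S1 x \<in> crel sm D"
    and s2: "finite S2" "\<forall>\<alpha>. \<alpha> \<notin> S2 \<longrightarrow> y \<alpha> = 0" "Psi m (\<Sum>i<n. m i) S2 y \<in> crel sm D" by blast
  have "Psi m (\<Sum>i<n. m i) (S1 \<union> S2) (x + y) = Psi m (\<Sum>i<n. m i) S1 x + Psi m (\<Sum>i<n. m i) S2 y"
    using Psi_superset[of "S1 \<union> S2" S1 x m] Psi_superset[of "S1 \<union> S2" S2 y m] s1 s2
    by (auto simp: fun_eq_iff Psi_add)
  then have "Psi m (\<Sum>i<n. m i) (S1 \<union> S2) (x + y) \<in> crel sm D" using s1 s2 by (simp add: crel_add)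
  moreover have "finite (S1 \<union> S2)" "\<forall>\<alpha>. \<alpha> \<notin> S1 \<union> S2 \<longrightarrow> (x + y) \<alpha> = 0" using s1 s2 by auto
  ultimately show ?case by blast
next
  case (hrel_smul x k)
  then obtain S where s: "finite S" "\<forall>\<alpha>. \<alpha> \<notin> S \<longrightarrow> x \<alpha> = 0" "Psi m (\<Sum>i<n. m i) S x \<in> crel sm D" by blast
  have "Psi m (\<Sum>i<n. m i) S (\<lambda>\<alpha>. sm k (x \<alpha>)) = (\<lambda>j. sm k (Psi m (\<Sum>i<n. m i) S x j))"
    by (simp add: fun_eq_iff Psi_sm)
  then show ?case using s by (intro exI[of _ S]) (auto intro: crel_smul)
qed

end

lemma lk_map_key: "inj f \<Longrightarrow> lk (Poly_Mapping.map_key f p) = lk p \<circ> f"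
  by (rule map_key.rep_eq)

context
  fixes \<sigma> :: "nat \<Rightarrow> nat"
  assumes b: "bij \<sigma>"
begin

lemma inj_s: "inj \<sigma>" using b bij_is_inj by blast
lemma inj_is: "inj (inv \<sigma>)" using b bij_imp_bij_inv bij_is_inj by blast

lemma sis: "\<sigma> (inv \<sigma> k) = k" by (meson b bij_inv_eq_iff)
lemma iss: "inv \<sigma> (\<sigma> k) = k" by (simp add: inv_f_f[OF inj_s])

lemma mk_inv1: "Poly_Mapping.map_key \<sigma> (Poly_Mapping.map_key (inv \<sigma>) \<alpha>) = (\<alpha> :: nat \<Rightarrow>\<^sub>0 nat)"
  by (rule poly_mapping_eqI) (simp add: lk_map_key inj_s inj_is sis)

lemma mk_inv2: "Poly_Mapping.map_key (inv \<sigma>) (Poly_Mapping.map_key \<sigma> \<alpha>) = (\<alpha> :: nat \<Rightarrow>\<^sub>0 nat)"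
  by (rule poly_mapping_eqI) (simp add: lk_map_key inj_s inj_is sis)

lemma ks_mk: "ks (Poly_Mapping.map_key (inv \<sigma>) (\<alpha> :: nat \<Rightarrow>\<^sub>0 nat)) = \<sigma> ` ks \<alpha>"
proof -
  have "ks (Poly_Mapping.map_key (inv \<sigma>) \<alpha>) = {j. lk \<alpha> (inv \<sigma> j) \<noteq> 0}"
    by (auto simp: in_keys_iff lk_map_key inj_is)
  also have "\<dots> = \<sigma> ` ks \<alpha>"
  proof (intro set_eqI iffI)
    fix x assume "x \<in> {j. lk \<alpha> (inv \<sigma> j) \<noteq> 0}"
    then show "x \<in> \<sigma> ` ks \<alpha>"
      by (intro image_eqI[of _ _ "inv \<sigma> x"]) (auto simp: surj_f_inv_f[OF bij_is_surj[OF b]] in_keys_iff)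
  qed (auto simp: in_keys_iff inv_f_f[OF inj_s])
  finally show ?thesis .
qed

lemma dg_mk: "dg (Poly_Mapping.map_key (inv \<sigma>) \<alpha>) = dg \<alpha>"
  unfolding dg_def ks_mk
  by (simp add: sum.reindex inj_on_subset[OF inj_s] lk_map_key inj_is inv_f_f[OF inj_s])

lemma w_mk: "w m (Poly_Mapping.map_key (inv \<sigma>) \<alpha>) = w (m \<circ> \<sigma>) \<alpha>"
  unfolding w_def ks_mk
  by (simp add: prod.reindex inj_on_subset[OF inj_s] lk_map_key inj_is inv_f_f[OF inj_s])

end

context CA begin

lemma Psi_perm1:
  assumes b: "bij \<sigma>" and fin: "finite S" and sub: "Poly_Mapping.map_key (inv \<sigma>) ` ks F \<subseteq> S"
  shows "Psi m M S (\<lambda>\<beta>. sm (lk F (Poly_Mapping.map_key \<sigma> \<beta>)) c) k = sm (rho (m \<circ> \<sigma>) F (M - k)) c"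
proof -
  let ?mk = "Poly_Mapping.map_key (inv \<sigma>)"
  define h where "h = (\<lambda>\<beta>. if M - int (dg \<beta>) = k then w m \<beta> * lk F (Poly_Mapping.map_key \<sigma> \<beta>) else 0)"
  have "Psi m M S (\<lambda>\<beta>. sm (lk F (Poly_Mapping.map_key \<sigma> \<beta>)) c) k = sm (\<Sum>\<beta>\<in>S. h \<beta>) c"
    unfolding Psi_def h_def by (simp add: scale_sum_left if_distrib[of "\<lambda>x. sm x c"] cong: if_cong)
  also have "(\<Sum>\<beta>\<in>S. h \<beta>) = (\<Sum>\<beta>\<in>?mk ` ks F. h \<beta>)"
  proof (rule sum.mono_neutral_right[OF fin sub], intro ballI)
    fix \<beta> assume "\<beta> \<in> S - ?mk ` ks F"
    then have "Poly_Mapping.map_key \<sigma> \<beta> \<notin> ks F" using mk_inv2[OF b, of \<beta>] by (metis DiffD2 image_eqI)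
    then show "h \<beta> = 0" by (simp add: h_def in_keys_iff)
  qed
  also have "\<dots> = (\<Sum>\<alpha>\<in>ks F. h (?mk \<alpha>))"
    by (rule sum.reindex[unfolded comp_def]) (metis inj_onI mk_inv1[OF b])
  also have "\<dots> = rho (m \<circ> \<sigma>) F (M - k)"
    unfolding rho_def L_def h_def by (intro sum.cong refl) (auto simp: mk_inv1[OF b] dg_mk[OF b] w_mk[OF b])
  finally show ?thesis .
qed

lemma Psi_0: "Psi m M S (\<lambda>_. 0) k = 0" unfolding Psi_def by (rule sum.neutral) simp

lemma Psi_perm:
  assumes b: "bij \<sigma>" and fin: "finite S" and sub: "\<forall>x\<in>set X. Poly_Mapping.map_key (inv \<sigma>) ` ks (fst x) \<subseteq> S"
  shows "Psi m M S (perm_t \<sigma> (canon sm X)) k = Ev (m \<circ> \<sigma>) M X k"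
  using sub
proof (induction X)
  case Nil
  then show ?case by (simp add: perm_t_def canon_def Ev_def Psi_0)
next
  case (Cons x X)
  obtain F c where x: "x = (F, c)" by force
  have e: "perm_t \<sigma> (canon sm (x # X)) = (\<lambda>\<beta>. sm (lk F (Poly_Mapping.map_key \<sigma> \<beta>)) c) + perm_t \<sigma> (canon sm X)"
    by (simp add: perm_t_def canon_def x fun_eq_iff)
  have "Psi m M S (perm_t \<sigma> (canon sm (x # X))) k =
      Psi m M S (\<lambda>\<beta>. sm (lk F (Poly_Mapping.map_key \<sigma> \<beta>)) c) k + Psi m M S (perm_t \<sigma> (canon sm X)) k"
    unfolding e by (rule Psi_add)
  then show ?case using Cons Psi_perm1[OF b fin, of F m M c k]
    by (simp add: x Ev_def comp_def)
qed

end

lemma sum_fun_apply: "(\<Sum>i\<in>A. f i) x = (\<Sum>i\<in>A. f i x)"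
  by (induction A rule: infinite_finite_induct) auto

lemma nleaves_pos: "nleaves t > 0"
  by (induction t) auto

lemma finite_shapes_le: "finite {t. nleaves t \<le> n}"
proof (induction n)
  case 0
  have "\<forall>t. \<not> nleaves t \<le> 0" using nleaves_pos by (simp add: not_le)
  then have e: "{t. nleaves t \<le> 0} = {}" by blast
  show ?case unfolding e by simp
next
  case (Suc n)
  have "{t. nleaves t \<le> Suc n} \<subseteq> insert Lf ((\<lambda>(l, r). Nd l r) ` ({t. nleaves t \<le> n} \<times> {t. nleaves t \<le> n}))"
  proof
    fix t assume a: "t \<in> {t. nleaves t \<le> Suc n}"
    show "t \<in> insert Lf ((\<lambda>(l, r). Nd l r) ` ({t. nleaves t \<le> n} \<times> {t. nleaves t \<le> n}))"
    proof (cases t)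
      case Lf then show ?thesis by simp
    next
      case (Nd l r)
      have "nleaves l > 0" "nleaves r > 0" by (rule nleaves_pos)+
      then have "nleaves l \<le> n" "nleaves r \<le> n" using a Nd by auto
      then show ?thesis using Nd by (auto intro!: image_eqI[of _ _ "(l, r)"])
    qed
  qed
  moreover have "finite (insert Lf ((\<lambda>(l, r). Nd l r) ` ({t. nleaves t \<le> n} \<times> {t. nleaves t \<le> n})))"
    using Suc by simp
  ultimately show ?case by (rule finite_subset)
qed

lemma finite_shapes: "finite {t. nleaves t = n}"
  by (rule finite_subset[OF _ finite_shapes_le[of n]]) auto

context CA begin

lemma Psi_sum: "Psi m M S (\<Sum>i\<in>A. f i) k = (\<Sum>i\<in>A. Psi m M S (f i) k)"
proof (induction A rule: infinite_finite_induct)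
  case (infinite A)
  then show ?case using Psi_0 by (simp add: zero_fun_def)
next
  case empty
  then show ?case using Psi_0 by (simp add: zero_fun_def)
next
  case (insert x F)
  then show ?case by (simp only: sum.insert[OF insert(1,2)] Psi_add insert(3))
qed

lemma single_case:
  fixes coef :: "(nat \<Rightarrow> nat) \<Rightarrow> shape \<Rightarrow> 'k"
  assumes hyp: "\<forall>a. fstar sm cp n coef a \<in> hrel sm D n" and xs: "\<forall>i<n. x i = [(mm i, aa i)]"
  shows "fcoeff sm cp n coef x \<in> crel sm D"
proof -
  define Perms where "Perms = {\<sigma>. \<sigma> permutes {..<n}}"
  define Ts where "Ts = {t. nleaves t = n}"
  define M where "M = (\<Sum>i<n. mm i)"
  define bs where "bs \<sigma> = map (\<lambda>i. aa (\<sigma> i)) [0..<n]" for \<sigma> :: "nat \<Rightarrow> nat"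
  define P where "P \<sigma> t = (pstar cp 0 t (bs \<sigma>) :: ('k mpoly \<times> 'c) list)" for \<sigma> t
  define T0 where "T0 = fstar sm cp n coef aa"
  obtain S0 where S0: "finite S0" "\<forall>\<alpha>. \<alpha> \<notin> S0 \<longrightarrow> T0 \<alpha> = 0" "Psi mm M S0 T0 \<in> crel sm D"
    using hrel_Psi[OF hyp[rule_format, of aa], of mm] unfolding T0_def M_def by blast
  define S where "S = S0 \<union> (\<Union>\<sigma>\<in>Perms. \<Union>t\<in>Ts. \<Union>y\<in>set (P \<sigma> t). Poly_Mapping.map_key (inv \<sigma>) ` ks (fst y))"
  have fP: "finite Perms" unfolding Perms_def by (rule finite_permutations) simp
  have fT: "finite Ts" unfolding Ts_def by (rule finite_shapes)
  have finS: "finite S" unfolding S_def using S0(1) fP fT by auto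
  have "Psi mm M S T0 = Psi mm M S0 T0"
  proof (rule Psi_superset[OF finS])
    show "S0 \<subseteq> S" unfolding S_def by blast
    show "\<And>\<alpha>. \<alpha> \<notin> S0 \<Longrightarrow> T0 \<alpha> = 0" using S0(2) by blast
  qed
  moreover have "Psi mm M S T0 = fcoeff sm cp n coef x"
  proof
    fix k
    have T0: "T0 = (\<Sum>\<sigma>\<in>Perms. \<Sum>t\<in>Ts. (\<lambda>\<beta>. sm (coef \<sigma> t) (perm_t \<sigma> (canon sm (P \<sigma> t)) \<beta>)))"
      by (simp add: T0_def fstar_def Perms_def Ts_def P_def bs_def)
    have "Psi mm M S T0 k = (\<Sum>\<sigma>\<in>Perms. \<Sum>t\<in>Ts. sm (coef \<sigma> t) (Psi mm M S (perm_t \<sigma> (canon sm (P \<sigma> t))) k))"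
      unfolding T0 Psi_sum Psi_sm ..
    also have "\<dots> = (\<Sum>\<sigma>\<in>Perms. \<Sum>t\<in>Ts. sm (coef \<sigma> t) (canonC (evalC sm cp t (map (\<lambda>i. x (\<sigma> i)) [0..<n])) k))"
    proof (intro sum.cong refl arg_cong[where f = "sm _"])
      fix \<sigma> t assume \<sigma>: "\<sigma> \<in> Perms" and t: "t \<in> Ts"
      have p: "\<sigma> permutes {..<n}" using \<sigma> by (simp add: Perms_def)
      have nt: "nleaves t = n" using t by (simp add: Ts_def)
      have e1: "Psi mm M S (perm_t \<sigma> (canon sm (P \<sigma> t))) k = Ev (mm \<circ> \<sigma>) M (P \<sigma> t) k"
      proof (rule Psi_perm[OF permutes_bij[OF p] finS])
        show "\<forall>y\<in>set (P \<sigma> t). Poly_Mapping.map_key (inv \<sigma>) ` ks (fst y) \<subseteq> S"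
          unfolding S_def using \<sigma> t by blast
      qed
      have Meq: "M = (\<Sum>i\<in>{0..<0 + nleaves t}. (mm \<circ> \<sigma>) i)"
        unfolding M_def nt using sum.permute[OF p, of mm] by (simp add: atLeast0LessThan comp_def)
      have e2: "Ev (mm \<circ> \<sigma>) M (P \<sigma> t) k =
          canonC (evalC sm cp t (map (\<lambda>i. [((mm \<circ> \<sigma>) (0 + i), bs \<sigma> ! i)]) [0..<nleaves t])) k"
        unfolding P_def Meq by (rule pstar_eval[symmetric]) (simp add: bs_def nt)
      have e3: "map (\<lambda>i. [((mm \<circ> \<sigma>) (0 + i), bs \<sigma> ! i)]) [0..<nleaves t] = map (\<lambda>i. x (\<sigma> i)) [0..<n]"
      proof (unfold nt, intro map_cong refl)
        fix i assume "i \<in> set [0..<n]"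
        then have i: "i < n" by simp
        then have "\<sigma> i < n" using permutes_in_image[OF p, of i] by simp
        then show "[((mm \<circ> \<sigma>) (0 + i), bs \<sigma> ! i)] = x (\<sigma> i)" using i xs by (simp add: bs_def)
      qed
      show "Psi mm M S (perm_t \<sigma> (canon sm (P \<sigma> t))) k = canonC (evalC sm cp t (map (\<lambda>i. x (\<sigma> i)) [0..<n])) k"
        unfolding e1 e2 e3 ..
    qed
    also have "\<dots> = fcoeff sm cp n coef x k"
      by (simp only: fcoeff_def sum_fun_apply Perms_def Ts_def)
    finally show "Psi mm M S T0 k = fcoeff sm cp n coef x k" .
  qed
  ultimately show ?thesis using S0(3) by metis
qed

end

context CA begin

lemma upd_map:
  assumes p: "\<sigma> permutes {..<n}" and i: "i < n"
  shows "map (\<lambda>l. (x(i := Z)) (\<sigma> l)) [0..<n] = (map (\<lambda>l. x (\<sigma> l)) [0..<n])[inv \<sigma> i := Z]"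
proof (rule nth_equalityI)
  show "length (map (\<lambda>l. (x(i := Z)) (\<sigma> l)) [0..<n]) = length ((map (\<lambda>l. x (\<sigma> l)) [0..<n])[inv \<sigma> i := Z])" by simp
  fix l assume "l < length (map (\<lambda>l. (x(i := Z)) (\<sigma> l)) [0..<n])"
  then have l: "l < n" by simp
  have "(\<sigma> l = i) = (l = inv \<sigma> i)" using permutes_inv_eq[OF p, of i l] by auto
  then show "map (\<lambda>l. (x(i := Z)) (\<sigma> l)) [0..<n] ! l = (map (\<lambda>l. x (\<sigma> l)) [0..<n])[inv \<sigma> i := Z] ! l"
    using l by (auto simp: nth_list_update)
qed

lemma inv_lt: "\<sigma> permutes {..<n} \<Longrightarrow> i < n \<Longrightarrow> inv \<sigma> i < n"
  using permutes_in_image[OF permutes_inv, of \<sigma> "{..<n}" i] by simp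

lemma fcoeff_split:
  assumes i: "i < n"
  shows "fcoeff sm cp n coef (x(i := X1 @ X2)) = fcoeff sm cp n coef (x(i := X1)) + fcoeff sm cp n coef (x(i := X2))"
proof
  fix k
  show "fcoeff sm cp n coef (x(i := X1 @ X2)) k = (fcoeff sm cp n coef (x(i := X1)) + fcoeff sm cp n coef (x(i := X2))) k"
    unfolding fcoeff_def plus_fun_def sum_fun_apply sum.distrib[symmetric]
  proof (intro sum.cong refl)
    fix \<sigma> t assume \<sigma>: "\<sigma> \<in> {\<sigma>. \<sigma> permutes {..<n}}" and t: "t \<in> {t. nleaves t = n}"
    have p: "\<sigma> permutes {..<n}" and nt: "nleaves t = n" using \<sigma> t by auto
    have j: "inv \<sigma> i < nleaves t" using inv_lt[OF p i] nt by simp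
    have len: "length (map (\<lambda>l. x (\<sigma> l)) [0..<n]) = nleaves t" using nt by simp
    show "sm (coef \<sigma> t) (canonC (evalC sm cp t (map (\<lambda>l. (x(i := X1 @ X2)) (\<sigma> l)) [0..<n])) k) =
      sm (coef \<sigma> t) (canonC (evalC sm cp t (map (\<lambda>l. (x(i := X1)) (\<sigma> l)) [0..<n])) k) +
      sm (coef \<sigma> t) (canonC (evalC sm cp t (map (\<lambda>l. (x(i := X2)) (\<sigma> l)) [0..<n])) k)"
      unfolding upd_map[OF p i] evalC_add[OF len j] scale_right_distrib ..
  qed
qed

lemma fcoeff_zero:
  assumes i: "i < n" and e: "x i = []"
  shows "fcoeff sm cp n coef x = (\<lambda>_. 0)"
proof
  fix k
  have z: "canonC (evalC sm cp t (map (\<lambda>l. x (\<sigma> l)) [0..<n])) k = 0"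
    if p: "\<sigma> permutes {..<n}" and nt: "nleaves t = n" for \<sigma> t
  proof -
    have j: "inv \<sigma> i < nleaves t" using inv_lt[OF p i] nt by simp
    have len: "length (map (\<lambda>l. x (\<sigma> l)) [0..<n]) = nleaves t" using nt by simp
    have "map (\<lambda>l. x (\<sigma> l)) [0..<n] = map (\<lambda>l. (x(i := [])) (\<sigma> l)) [0..<n]" using e by (simp add: fun_upd_idem)
    also have "\<dots> = (map (\<lambda>l. x (\<sigma> l)) [0..<n])[inv \<sigma> i := []]" by (rule upd_map[OF p i])
    finally show ?thesis using evalC_zero[OF len j] by simp
  qed
  show "fcoeff sm cp n coef x k = 0"
    unfolding fcoeff_def sum_fun_apply by (intro sum.neutral ballI) (auto simp: z)
qed

lemma measure_lt:
  fixes x :: "nat \<Rightarrow> 'a list"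
  assumes "i < n" "length Z < length (x i)"
  shows "(\<Sum>l<n. length ((x(i := Z)) l)) < (\<Sum>l<n. length (x l))"
  by (rule sum_strict_mono_ex1) (use assms in auto)

lemma general:
  assumes single: "\<And>y. \<forall>i<n. length (y i) = 1 \<Longrightarrow> fcoeff sm cp n coef y \<in> crel sm D"
  shows "fcoeff sm cp n coef x \<in> crel sm D"
proof (induction "\<Sum>l<n. length (x l)" arbitrary: x rule: less_induct)
  case less
  show ?case
  proof (cases "\<forall>i<n. length (x i) = 1")
    case True
    then show ?thesis by (rule single)
  next
    case False
    then obtain i where i: "i < n" "length (x i) \<noteq> 1" by blast
    show ?thesis
    proof (cases "x i")
      case Nil
      have "fcoeff sm cp n coef x = (\<lambda>_. 0)" by (rule fcoeff_zero[where i = i]) (use i Nil in auto)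
      then show ?thesis using crel_zero by simp
    next
      case (Cons h tl)
      then have tl: "tl \<noteq> []" using i by auto
      have ex: "x = x(i := [h] @ tl)" using Cons by (metis append_Cons append_Nil fun_upd_triv)
      have "fcoeff sm cp n coef x = fcoeff sm cp n coef (x(i := [h])) + fcoeff sm cp n coef (x(i := tl))"
        by (subst ex) (rule fcoeff_split[OF i(1)])
      moreover have "fcoeff sm cp n coef (x(i := [h])) \<in> crel sm D"
        by (rule less) (rule measure_lt[OF i(1)], use Cons tl in simp)
      moreover have "fcoeff sm cp n coef (x(i := tl)) \<in> crel sm D"
        by (rule less) (rule measure_lt[OF i(1)], use Cons in simp)
      ultimately show ?thesis by (simp add: crel_add)
    qed
  qed
qed

end

theorem theorem3p2:
  fixes sm :: "'k::field_char_0 \<Rightarrow> 'c::ab_group_add \<Rightarrow> 'c"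
    and D :: "'c \<Rightarrow> 'c"
    and cp :: "nat \<Rightarrow> 'c \<Rightarrow> 'c \<Rightarrow> 'c"
    and n :: nat
    and coef :: "(nat \<Rightarrow> nat) \<Rightarrow> shape \<Rightarrow> 'k"
  assumes "conformal_algebra sm D cp"
    and "\<forall>a :: nat \<Rightarrow> 'c. fstar sm cp n coef a \<in> hrel sm D n"
  shows "\<forall>x :: nat \<Rightarrow> (int \<times> 'c) list. fcoeff sm cp n coef x \<in> crel sm D"
proof -
  interpret CA sm D cp using assms(1) by (simp add: CA_def)
  show ?thesis
  proof
    fix x :: "nat \<Rightarrow> (int \<times> 'c) list"
    show "fcoeff sm cp n coef x \<in> crel sm D"
    proof (rule general)
      fix y :: "nat \<Rightarrow> (int \<times> 'c) list"
      assume y: "\<forall>i<n. length (y i) = 1"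
      have "\<forall>i<n. y i = [((\<lambda>i. fst (hd (y i))) i, (\<lambda>i. snd (hd (y i))) i)]"
      proof (intro allI impI)
        fix i assume "i < n"
        then have "length (y i) = 1" using y by blast
        then show "y i = [((\<lambda>i. fst (hd (y i))) i, (\<lambda>i. snd (hd (y i))) i)]"
          by (cases "y i") auto
      qed
      then show "fcoeff sm cp n coef y \<in> crel sm D"
        by (rule single_case[OF assms(2)])
    qed
  qed
qed

end
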